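(* Let $2\le p\le n$, $\beta_1\neq0$, $z_1,\dots,z_p\in\mathbb R$, and for $\lambda\ge0$ let $$L_p(\lambda)=\frac1n\Big(\beta_1-\operatorname{sgn}(z_1)(|z_1|-\lambda)_+\Big)^2+\frac1n\sum_{j=2}^p\big((|z_j|-\lambda)_+\big)^2,\quad L_1(\lambda)=\frac1n\Big(\beta_1-\operatorname{sgn}(z_1)(|z_1|-\lambda)_+\Big)^2,$$ with $L_p(\lambda_p^* )=\min_{\lambda\ge0}L_p(\lambda)$ and $L_1(\lambda_1^* )=\min_{\lambda\ge0}L_1(\lambda)$. Assume $\operatorname{sgn}(\beta_1)=\operatorname{sgn}(z_1)$ and $\max_{2\le j\le p}|z_j|>|z_1|$. Then $L_p(\lambda_p^* )>L_1(\lambda_1^* )$.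
   Context: $(a)_+=\max(a,0)$; $\operatorname{sgn}$ is the sign function. In the paper's setting $\mathbf z=\mathbf X^T\mathbf y$ for an orthonormal design with $\mathbf y=\mathbf X\boldsymbol\beta_0+\boldsymbol\varepsilon$, $\boldsymbol\beta_0=(\beta_1,0,\dots,0)^T$; $L_p$ and $L_1$ are the Lasso losses using all $p$ predictors and only the true predictor, respectively. *)

theory Defs
  imports Complex_Main
begin

definition pos_part :: "real \<Rightarrow> real" where
  "pos_part a = max a 0"

definition L_p :: "nat \<Rightarrow> nat \<Rightarrow> real \<Rightarrow> (nat \<Rightarrow> real) \<Rightarrow> real \<Rightarrow> real" where
  "L_p n p \<beta>1 z lam =
     (1 / real n) * (\<beta>1 - sgn (z 1) * pos_part (\<bar>z 1\<bar> - lam))^2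
     + (1 / real n) * (\<Sum>j=2..p. (pos_part (\<bar>z j\<bar> - lam))^2)"

definition L_1 :: "nat \<Rightarrow> real \<Rightarrow> (nat \<Rightarrow> real) \<Rightarrow> real \<Rightarrow> real" where
  "L_1 n \<beta>1 z lam = (1 / real n) * (\<beta>1 - sgn (z 1) * pos_part (\<bar>z 1\<bar> - lam))^2"

end

theory Submission
  imports Defs
begin

lemma sq_form:
  assumes "sgn (b::real) = sgn z" "b \<noteq> 0" "c \<ge> 0"
  shows "(b - sgn z * c)^2 = (\<bar>b\<bar> - c)^2"
proof (cases "b > 0")
  case True
  then have "sgn z = 1" using assms by (simp add: sgn_if split: if_splits)
  then show ?thesis using True by simp
next
  case False
  then have "b < 0" using assms by simp
  then have "sgn z = -1" using assms by (simp add: sgn_if split: if_splits)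
  then show ?thesis using \<open>b<0\<close> by (simp add: power2_eq_square algebra_simps)
qed

theorem lemma2p4:
  fixes n p :: nat and \<beta>1 :: real and z :: "nat \<Rightarrow> real" and lp l1 :: real
  assumes "2 \<le> p" and "p \<le> n"
    and "\<beta>1 \<noteq> 0"
    and "lp \<ge> 0" and "\<forall>lam\<ge>0. L_p n p \<beta>1 z lp \<le> L_p n p \<beta>1 z lam"
    and "l1 \<ge> 0" and "\<forall>lam\<ge>0. L_1 n \<beta>1 z l1 \<le> L_1 n \<beta>1 z lam"
    and "sgn \<beta>1 = sgn (z 1)"
    and "Max ((\<lambda>j. \<bar>z j\<bar>) ` {2..p}) > \<bar>z 1\<bar>"
  shows "L_p n p \<beta>1 z lp > L_1 n \<beta>1 z l1"
proof -
  define a where "a = \<bar>z 1\<bar>"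
  define b where "b = \<bar>\<beta>1\<bar>"
  have npos: "real n > 0" using assms(1,2) by simp
  have b0: "b > 0" using assms(3) b_def by simp
  have a0: "a > 0" using assms(3,8) a_def by (auto simp: sgn_if split: if_splits)
  have pp0: "\<And>x. pos_part x \<ge> 0" by (simp add: pos_part_def)
  have L1f: "\<And>lam. L_1 n \<beta>1 z lam = (1 / real n) * (b - pos_part (a - lam))^2"
    unfolding L_1_def a_def b_def using sq_form[OF assms(8,3) pp0] by simp
  define l0 where "l0 = (if b \<le> a then a - b else 0)"
  have "l0 \<ge> 0" using l0_def by simp
  then have "L_1 n \<beta>1 z l1 \<le> L_1 n \<beta>1 z l0" using assms(7) by blast
  also have "\<dots> = (1 / real n) * (max (b - a) 0)^2"
    unfolding L1f l0_def pos_part_def using a0 b0 by (auto simp: max_def)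
  finally have U: "L_1 n \<beta>1 z l1 \<le> (1 / real n) * (max (b - a) 0)^2" .
  define M where "M = Max ((\<lambda>j. \<bar>z j\<bar>) ` {2..p})"
  have "M \<in> (\<lambda>j. \<bar>z j\<bar>) ` {2..p}" unfolding M_def
    using assms(1) by (intro Max_in) auto
  then obtain j where j: "j \<in> {2..p}" "\<bar>z j\<bar> = M" by auto
  have Ma: "M > a" using assms(9) M_def a_def by simp
  have S: "(\<Sum>j=2..p. (pos_part (\<bar>z j\<bar> - lp))^2) \<ge> (pos_part (M - lp))^2"
    using j by (metis (no_types, lifting) finite_atLeastAtMost member_le_sum zero_le_power2)
  define c where "c = pos_part (a - lp)"
  have Lp: "L_p n p \<beta>1 z lp = (1 / real n) * ((b - c)^2 + (\<Sum>j=2..p. (pos_part (\<bar>z j\<bar> - lp))^2))"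
    unfolding L_p_def c_def a_def b_def using sq_form[OF assms(8,3) pp0[of "\<bar>z 1\<bar> - lp"]] by (simp add: distrib_left)
  have key: "(b - c)^2 + (pos_part (M - lp))^2 > (max (b - a) 0)^2"
  proof (cases "lp < M")
    case True
    have "(pos_part (M - lp))^2 > 0" using True by (simp add: pos_part_def)
    moreover have "(b - c)^2 \<ge> (max (b - a) 0)^2"
    proof (cases "b \<ge> a")
      case True
      have "c \<le> a" "c \<ge> 0" using a0 assms(4) by (auto simp: c_def pos_part_def)
      then have "b - c \<ge> b - a" "b - a \<ge> 0" using True by auto
      then show ?thesis using True by (simp add: power_mono)
    next
      case False then show ?thesis by simp
    qed
    ultimately show ?thesis by linarith
  next
    case False
    then have "c = 0" using Ma by (simp add: c_def pos_part_def)
    moreover have "b^2 > (max (b - a) 0)^2"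
      using a0 b0 by (auto simp: max_def intro!: power_strict_mono)
    moreover have "(pos_part (M - lp))^2 \<ge> 0" by simp
    ultimately show ?thesis by (simp only: diff_zero)
  qed
  have "(max (b - a) 0)^2 < (b - c)^2 + (\<Sum>j=2..p. (pos_part (\<bar>z j\<bar> - lp))^2)"
    using key S by linarith
  then have "(1 / real n) * (max (b - a) 0)^2 < L_p n p \<beta>1 z lp"
    unfolding Lp using npos by (simp add: divide_strict_right_mono)
  then show ?thesis using U by linarith
qed

end
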